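(* Let $\mathcal{S}=\{A_1,\dots,A_p\}\subseteq M_m$ ($p\ge1$), let $\langle\mathcal{S}\rangle_0$ be the unital subalgebra of $M_m$ generated by the $A_i$ and $\langle\mathcal{S}\rangle_1$ the (not necessarily unital) subalgebra generated by the $A_i$. Let $\tau(X)=\sum_{i=1}^pA_i^*XA_i$ on $M_m$. Let $(a_n)_{n\ge0}$ be strictly positive scalars such that $\sum_{n\ge0}a_n\tau^n$ converges in norm, and put $\sigma_0=\sum_{n=0}^\infty a_n\tau^n$, $\sigma_1=\sum_{n=1}^\infty a_n\tau^n$ (with $\tau^0$ the identity map). Then for $j=0,1$ the coefficient space of $\sigma_j$ equals $\langle\mathcal{S}\rangle_j$. Consequently, $\dim\langle\mathcal{S}\rangle_j$ equals the Choi rank of $\sigma_j$, and $A\in\langle\mathcal{S}\rangle_j$ if and only if there exists a scalar $q>0$ such that $\sigma_j-q\alpha_A$ is completely positive.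
   Context: Every completely positive (CP) map $\sigma$ on $M_m$ has a Choi-Kraus decomposition $\sigma(X)=\sum_{k=1}^rC_k^*XC_k$; the span of the $C_k$ does not depend on the decomposition and is called the (Choi-Kraus) coefficient space $\mathcal{M}_\sigma$ of $\sigma$; its dimension is the Choi rank of $\sigma$. For $A\in M_m$, $\alpha_A(X)=A^*XA$. *)

theory Defs
  imports "HOL-Analysis.Analysis"
begin

type_synonym 'm cmat = "complex^'m^'m"

definition cscale :: "complex \<Rightarrow> ('m::finite) cmat \<Rightarrow> ('m::finite) cmat" where
  "cscale c A = (\<chi> i j. c * A$i$j)"

definition adj :: "('m::finite) cmat \<Rightarrow> ('m::finite) cmat" where
  "adj A = (\<chi> i j. cnj (A$j$i))"

definition alpha :: "('m::finite) cmat \<Rightarrow> ('m::finite) cmat \<Rightarrow> ('m::finite) cmat" where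
  "alpha A X = adj A ** X ** A"

definition tau :: "('m::finite) cmat list \<Rightarrow> ('m::finite) cmat \<Rightarrow> ('m::finite) cmat" where
  "tau As X = sum_list (map (\<lambda>A. adj A ** X ** A) As)"

definition cinner :: "complex^('m::finite) \<Rightarrow> complex^'m \<Rightarrow> complex" where
  "cinner u w = (\<Sum>l\<in>UNIV. cnj (u$l) * w$l)"

text \<open>A k x k block matrix with blocks in M_m (blocks B i j, i,j<k), i.e. an element of
  M_k(M_m) = M_{km}, is positive semidefinite iff its quadratic form v^* B v is real and
  nonnegative for all v in C^{km}.\<close>
definition psd_block :: "nat \<Rightarrow> (nat \<Rightarrow> nat \<Rightarrow> ('m::finite) cmat) \<Rightarrow> bool" where
  "psd_block k B \<longleftrightarrow> (\<forall>v :: nat \<Rightarrow> complex^'m.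
      let q = (\<Sum>i<k. \<Sum>j<k. cinner (v i) (B i j *v v j)) in Im q = 0 \<and> Re q \<ge> 0)"

text \<open>Complete positivity: id_k \<otimes> phi is positive for every k.\<close>
definition completely_positive :: "(('m::finite) cmat \<Rightarrow> ('m::finite) cmat) \<Rightarrow> bool" where
  "completely_positive \<phi> \<longleftrightarrow>
     (\<forall>k B. psd_block k B \<longrightarrow> psd_block k (\<lambda>i j. \<phi> (B i j)))"

definition kraus_decomp :: "(('m::finite) cmat \<Rightarrow> ('m::finite) cmat) \<Rightarrow> ('m::finite) cmat list \<Rightarrow> bool" where
  "kraus_decomp \<phi> Cs \<longleftrightarrow> (\<forall>X. \<phi> X = sum_list (map (\<lambda>C. adj C ** X ** C) Cs))"

text \<open>Coefficient space: complex span of the Kraus coefficients of a decomposition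
  (independent of the chosen decomposition).\<close>
definition coeff_space :: "(('m::finite) cmat \<Rightarrow> ('m::finite) cmat) \<Rightarrow> ('m::finite) cmat set" where
  "coeff_space \<phi> = module.span cscale (set (SOME Cs. kraus_decomp \<phi> Cs))"

definition choi_rank :: "(('m::finite) cmat \<Rightarrow> ('m::finite) cmat) \<Rightarrow> nat" where
  "choi_rank \<phi> = vector_space.dim cscale (coeff_space \<phi>)"

definition is_subalg :: "('m::finite) cmat set \<Rightarrow> bool" where
  "is_subalg B \<longleftrightarrow> 0 \<in> B \<and> (\<forall>x\<in>B. \<forall>y\<in>B. x + y \<in> B \<and> x ** y \<in> B)
      \<and> (\<forall>c. \<forall>x\<in>B. cscale c x \<in> B)"

text \<open>Subalgebra generated by S (<S>_1) and unital subalgebra generated by S (<S>_0).\<close>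
definition gen_alg :: "('m::finite) cmat set \<Rightarrow> ('m::finite) cmat set" where
  "gen_alg S = \<Inter>{B. is_subalg B \<and> S \<subseteq> B}"

definition gen_ualg :: "('m::finite) cmat set \<Rightarrow> ('m::finite) cmat set" where
  "gen_ualg S = \<Inter>{B. is_subalg B \<and> S \<subseteq> B \<and> mat 1 \<in> B}"

end

theory Submission
  imports Defs
begin


lemma cscale_nth[simp]: "cscale c A $ i $ j = c * A $ i $ j"
  by (simp add: cscale_def)

lemma adj_nth[simp]: "adj A $ i $ j = cnj (A $ j $ i)"
  by (simp add: adj_def)

interpretation cv: vector_space "cscale :: complex \<Rightarrow> ('m::finite) cmat \<Rightarrow> _"
  by unfold_locales (simp_all add: vec_eq_iff algebra_simps)

lemma mm_nth: "(A ** B) $ i $ j = (\<Sum>k\<in>UNIV. A $ i $ k * B $ k $ j)"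
  by (simp add: matrix_matrix_mult_def)

lemma adj_mult: "adj (A ** B) = adj B ** adj (A::'m::finite cmat)"
  by (simp add: vec_eq_iff mm_nth mult.commute)

lemma cscale_mult_left: "cscale c A ** B = cscale c (A ** (B::'m::finite cmat))"
  by (simp add: vec_eq_iff mm_nth sum_distrib_left mult.assoc)
lemma cscale_mult_right: "A ** cscale c B = cscale c (A ** (B::'m::finite cmat))"
  by (simp add: vec_eq_iff mm_nth sum_distrib_left algebra_simps)

lemma scaleR_nth2: "(r *\<^sub>R (A::'m::finite cmat)) $ i $ j = complex_of_real r * A $ i $ j"
  using scaleR_conv_of_real[of r "A $ i $ j"] by simp

lemma scaleR_cscale: "r *\<^sub>R (A::'m::finite cmat) = cscale (complex_of_real r) A"
  by (simp add: vec_eq_iff scaleR_nth2 del: vector_scaleR_component)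

definition kmap :: "('m::finite) cmat list \<Rightarrow> 'm cmat \<Rightarrow> 'm cmat" where
  "kmap Cs X = sum_list (map (\<lambda>C. adj C ** X ** C) Cs)"

lemma sum_list_nth2: "(sum_list (map f xs)) $ i $ j = sum_list (map (\<lambda>x. f x $ i $ j) xs)"
  by (induction xs) auto

lemma kmap_nth: "kmap Cs X $ b $ d = sum_list (map (\<lambda>C. \<Sum>c\<in>UNIV. \<Sum>a\<in>UNIV. cnj (C $ a $ b) * X $ a $ c * C $ c $ d) Cs)"
  by (simp add: kmap_def sum_list_nth2 mm_nth sum_distrib_right)

lemma linear_kmap: "linear (kmap Cs)"
  apply (rule linearI)
  by (simp_all add: vec_eq_iff kmap_nth sum_list_addf sum.distrib algebra_simps scaleR_nth2 sum_distrib_left 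
        flip: sum_list_const_mult del: vector_scaleR_component)

lemma bl_kmap: "bounded_linear (kmap Cs)"
  using linear_kmap linear_conv_bounded_linear by blast



definition hform :: "('i::finite \<Rightarrow> 'i \<Rightarrow> complex) \<Rightarrow> ('i \<Rightarrow> complex) \<Rightarrow> complex" where
  "hform G v = (\<Sum>p\<in>UNIV. \<Sum>q\<in>UNIV. v p * cnj (v q) * G p q)"

definition psdm :: "('i::finite \<Rightarrow> 'i \<Rightarrow> complex) \<Rightarrow> bool" where
  "psdm G \<longleftrightarrow> (\<forall>v. Im (hform G v) = 0 \<and> Re (hform G v) \<ge> 0)"

lemma cnj_of_bool[simp]: "cnj (of_bool b) = of_bool b"
  by (cases b) auto

lemma sum_ofb: "(\<Sum>q\<in>UNIV. of_bool (q = (i::'i::finite)) * f q) = (f i :: complex)"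
proof -
  have "(\<Sum>q\<in>UNIV. of_bool (q = i) * f q) = (\<Sum>q\<in>UNIV. if q = i then f q else 0)"
    by (intro sum.cong) auto
  then show ?thesis by simp
qed

lemma hform_shift:
  "hform G (\<lambda>r. v r + t * of_bool (r = i)) = hform G v + cnj t * (\<Sum>p\<in>UNIV. v p * G p i)
     + t * (\<Sum>q\<in>UNIV. cnj (v q) * G i q) + t * cnj t * G i i"
proof -
  have "hform G (\<lambda>r. v r + t * of_bool (r = i)) =
     (\<Sum>p\<in>UNIV. \<Sum>q\<in>UNIV. v p * cnj (v q) * G p q) + (\<Sum>p\<in>UNIV. \<Sum>q\<in>UNIV. of_bool (q = i) * (v p * cnj t * G p q))
        + (\<Sum>p\<in>UNIV. of_bool (p = i) * (\<Sum>q\<in>UNIV. t * cnj (v q) * G p q)) + (\<Sum>p\<in>UNIV. of_bool (p = i) * (\<Sum>q\<in>UNIV. of_bool (q = i) * (t * cnj t * G p q)))"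
    unfolding hform_def sum_distrib_left sum.distrib[symmetric] by (intro sum.cong refl) (simp add: algebra_simps)
  also have "\<dots> = hform G v + cnj t * (\<Sum>p\<in>UNIV. v p * G p i)
     + t * (\<Sum>q\<in>UNIV. cnj (v q) * G i q) + t * cnj t * G i i"
    unfolding sum_ofb hform_def by (simp add: sum_distrib_left algebra_simps)
  finally show ?thesis .
qed

lemma hform_unit: "hform G (\<lambda>r. t * of_bool (r = i)) = t * cnj t * G i i"
  using hform_shift[of G "\<lambda>_. 0" t i] by (simp add: hform_def)

lemma psdm_diag: assumes "psdm G" shows "Im (G i i) = 0" "Re (G i i) \<ge> 0"
  using assms hform_unit[of G 1 i] unfolding psdm_def by (metis complex_cnj_one mult_1)+

lemma psdm_herm: assumes "psdm G" shows "G q p = cnj (G p q)"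
proof -
  define v1 where "v1 = (\<lambda>r. of_bool (r = p) + 1 * of_bool (r = q) :: complex)"
  define v2 where "v2 = (\<lambda>r. of_bool (r = p) + \<i> * of_bool (r = q) :: complex)"
  have e: "hform G (\<lambda>r. of_bool (r = p) + t * of_bool (r = q)) = G p p + cnj t * G p q + t * G q p + t * cnj t * G q q" for t
    using hform_shift[of G "\<lambda>r. 1 * of_bool (r = p)" t q] hform_unit[of G 1 p] sum_ofb[of p "\<lambda>n. G n q"] sum_ofb[of p "\<lambda>n. G q n"]
    by (simp add: sum_distrib_left)
  have "Im (hform G v1) = 0" "Im (hform G v2) = 0" using assms unfolding psdm_def by auto
  moreover have "Im (G p p) = 0" "Im (G q q) = 0" using psdm_diag[OF assms] by auto
  ultimately have "Im (G p q + G q p) = 0" "Re (G q p) - Re (G p q) = 0"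
    using e[of 1] e[of \<i>] unfolding v1_def v2_def by (simp_all add: algebra_simps)
  then show ?thesis by (simp add: complex_eq_iff)
qed

lemma hform_two: "hform G (\<lambda>r. of_bool (r = p) + t * of_bool (r = q)) = G p p + cnj t * G p q + t * G q p + t * cnj t * G q q"
    using hform_shift[of G "\<lambda>r. 1 * of_bool (r = p)" t q] hform_unit[of G 1 p] sum_ofb[of p "\<lambda>n. G n q"] sum_ofb[of p "\<lambda>n. G q n"]
    by (simp add: sum_distrib_left)

lemma psdm_diag0: assumes "psdm G" "G i i = 0" shows "G i q = 0"
proof (rule ccontr)
  define w where "w = G i q"
  assume "G i q \<noteq> 0"
  then have w0: "w \<noteq> 0" by (simp add: w_def)
  then have c: "cmod w ^ 2 > 0" by simp
  define t where "t = (Re (G q q) + 1) / (2 * cmod w ^ 2)"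
  define z where "z = - (of_real t * cnj w)"
  have h: "G q i = cnj w" using psdm_herm[OF assms(1), of i q] w_def by simp
  have "Re (hform G (\<lambda>r. of_bool (r = q) + z * of_bool (r = i))) \<ge> 0" using assms(1) psdm_def by blast
  moreover have "hform G (\<lambda>r. of_bool (r = q) + z * of_bool (r = i)) = G q q + cnj z * cnj w + z * w"
    using hform_two[of G q z i] h assms(2) w_def by simp
  moreover have zw: "z * w = - of_real (t * cmod w ^ 2)"
  proof -
    have "z * w = - (of_real t * (w * cnj w))" unfolding z_def by (simp add: ac_simps)
    also have "w * cnj w = of_real (cmod w ^ 2)" by (rule complex_norm_square[symmetric])
    finally show ?thesis by simp
  qed
  moreover have "cnj z * cnj w = - of_real (t * cmod w ^ 2)"
  proof -
    have "cnj z * cnj w = cnj (z * w)" by simp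
    then show ?thesis using zw by simp
  qed
  moreover have "t * cmod w ^ 2 = (Re (G q q) + 1) / 2" using c unfolding t_def by simp
  ultimately have "0 \<le> Re (G q q) - 2 * ((Re (G q q) + 1) / 2)" by simp
  then show False by simp
qed

lemma psdm_schur:
  assumes "psdm G" "G i i \<noteq> 0"
  shows "psdm (\<lambda>p q. G p q - G p i * G i q / G i i)"
proof -
  define g where "g = G i i"
  have g0: "g \<noteq> 0" using assms g_def by simp
  have gr: "cnj g = g" using psdm_diag[OF assms(1), of i] g_def by (simp add: complex_eq_iff)
  show ?thesis unfolding psdm_def
  proof
    fix v
    define s where "s = (\<Sum>p\<in>UNIV. v p * G p i)"
    have s': "(\<Sum>q\<in>UNIV. cnj (v q) * G i q) = cnj s"
      unfolding s_def by (simp add: psdm_herm[OF assms(1), of _ i])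
    define t where "t = - s / g"
    have "hform (\<lambda>p q. G p q - G p i * G i q / G i i) v = hform G v - (\<Sum>p\<in>UNIV. \<Sum>q\<in>UNIV. v p * G p i * (cnj (v q) * G i q)) / g"
      unfolding hform_def g_def by (simp add: algebra_simps sum_subtractf sum_divide_distrib)
    also have "\<dots> = hform G v - s * cnj s / g"
    proof -
      have "(\<Sum>p\<in>UNIV. \<Sum>q\<in>UNIV. v p * G p i * (cnj (v q) * G i q)) = s * (\<Sum>q\<in>UNIV. cnj (v q) * G i q)"
        unfolding s_def sum_product by simp
      then show ?thesis using s' by simp
    qed
    also have "\<dots> = hform G (\<lambda>r. v r + t * of_bool (r = i))"
    proof -
      have ct: "cnj t = - cnj s / g" using gr by (simp add: t_def)
      have key: "cnj t * s + t * cnj s + t * cnj t * g = - (s * cnj s) / g"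
        unfolding ct t_def using g0 by (simp add: divide_simps)
      have "hform G (\<lambda>r. v r + t * of_bool (r = i)) = hform G v + (cnj t * s + t * cnj s + t * cnj t * g)"
        unfolding hform_shift s_def[symmetric] s' g_def[symmetric] by (simp only: add.assoc)
      also have "\<dots> = hform G v - s * cnj s / g" unfolding key by simp
      finally show ?thesis by simp
    qed
    finally show "Im (hform (\<lambda>p q. G p q - G p i * G i q / G i i) v) = 0 \<and> 0 \<le> Re (hform (\<lambda>p q. G p q - G p i * G i q / G i i) v)"
      using assms(1) unfolding psdm_def by metis
  qed
qed

lemma psdm_decomp:
  fixes G :: "'i::finite \<Rightarrow> 'i \<Rightarrow> complex"
  assumes "psdm G"
  shows "\<exists>xs. \<forall>p q. G p q = (\<Sum>x\<leftarrow>xs. cnj (x p) * x q)"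
  using assms
proof (induction "card {p. \<exists>q. G p q \<noteq> 0}" arbitrary: G rule: less_induct)
  case less
  show ?case
  proof (cases "\<exists>i. G i i \<noteq> 0")
    case False
    then have "G p q = 0" for p q using psdm_diag0[OF less.prems] by blast
    then show ?thesis by (intro exI[of _ "[]"]) simp
  next
    case True
    then obtain i where i: "G i i \<noteq> 0" by blast
    define G' where "G' = (\<lambda>p q. G p q - G p i * G i q / G i i)"
    have ps: "psdm G'" unfolding G'_def using psdm_schur[OF less.prems i] .
    have sub: "{p. \<exists>q. G' p q \<noteq> 0} \<subset> {p. \<exists>q. G p q \<noteq> 0}"
    proof
      show "{p. \<exists>q. G' p q \<noteq> 0} \<subseteq> {p. \<exists>q. G p q \<noteq> 0}"
      proof
        fix p assume "p \<in> {p. \<exists>q. G' p q \<noteq> 0}"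
        then obtain q where "G' p q \<noteq> 0" by blast
        then have "G p q \<noteq> 0 \<or> G p i \<noteq> 0" unfolding G'_def by auto
        then show "p \<in> {p. \<exists>q. G p q \<noteq> 0}" by blast
      qed
      have "G' i q = 0" for q unfolding G'_def using i by simp
      then have "i \<notin> {p. \<exists>q. G' p q \<noteq> 0}" by simp
      moreover have "i \<in> {p. \<exists>q. G p q \<noteq> 0}" using i by blast
      ultimately show "{p. \<exists>q. G' p q \<noteq> 0} \<noteq> {p. \<exists>q. G p q \<noteq> 0}" by metis
    qed
    have "card {p. \<exists>q. G' p q \<noteq> 0} < card {p. \<exists>q. G p q \<noteq> 0}"
      by (rule psubset_card_mono[OF _ sub]) simp
    from less.hyps[OF this ps] obtain xs where xs: "\<forall>p q. G' p q = (\<Sum>x\<leftarrow>xs. cnj (x p) * x q)" by blast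
    define g where "g = G i i"
    have gr: "cnj g = g" using psdm_diag[OF less.prems, of i] g_def by (simp add: complex_eq_iff)
    have gpos: "Re g > 0" using psdm_diag[OF less.prems, of i] i g_def by (simp add: complex_eq_iff)
    define y where "y = (\<lambda>q. G i q / of_real (sqrt (Re g)))"
    have "cnj (y p) * y q = G p i * G i q / G i i" for p q
    proof -
      have "cnj (y p) * y q = cnj (G i p) * G i q / (of_real (sqrt (Re g)) * of_real (sqrt (Re g)))"
        unfolding y_def by simp
      also have "of_real (sqrt (Re g)) * of_real (sqrt (Re g)) = g"
        using gpos gr by (simp add: complex_eq_iff flip: of_real_mult) 
      finally show ?thesis using psdm_herm[OF less.prems, of p i] g_def by simp
    qed
    then have "G p q = (\<Sum>x\<leftarrow>y # xs. cnj (x p) * x q)" for p q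
    proof -
      have "G p q = G' p q + G p i * G i q / G i i" unfolding G'_def by simp
      then show ?thesis using xs \<open>\<And>p q. cnj (y p) * y q = G p i * G i q / G i i\<close>[of p q] by simp
    qed
    then show ?thesis by (intro exI[of _ "y # xs"]) (intro allI)
  qed
qed



definition vecm :: "('m::finite) cmat \<Rightarrow> 'm \<times> 'm \<Rightarrow> complex" where
  "vecm M p = M $ fst p $ snd p"

definition unvec :: "(('m::finite) \<times> 'm \<Rightarrow> complex) \<Rightarrow> 'm cmat" where
  "unvec x = (\<chi> a b. x (a, b))"

lemma vecm_unvec[simp]: "vecm (unvec x) = x" by (simp add: vecm_def unvec_def fun_eq_iff)

definition Em :: "'m \<Rightarrow> 'm \<Rightarrow> ('m::finite) cmat" where
  "Em a c = (\<chi> i j. if i = a \<and> j = c then 1 else 0)"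

definition Gm :: "(('m::finite) cmat \<Rightarrow> 'm cmat) \<Rightarrow> 'm \<times> 'm \<Rightarrow> 'm \<times> 'm \<Rightarrow> complex" where
  "Gm \<phi> p q = \<phi> (Em (fst p) (fst q)) $ snd p $ snd q"

definition Qf :: "(('m::finite) cmat \<Rightarrow> 'm cmat) \<Rightarrow> 'm cmat \<Rightarrow> complex" where
  "Qf \<phi> Y = hform (Gm \<phi>) (vecm Y)"

definition fip :: "('m::finite) cmat \<Rightarrow> 'm cmat \<Rightarrow> complex" where
  "fip Y C = (\<Sum>p\<in>UNIV. cnj (vecm Y p) * vecm C p)"

definition expand :: "(('m::finite) cmat \<Rightarrow> 'm cmat) \<Rightarrow> bool" where
  "expand \<phi> \<longleftrightarrow> (\<forall>X b d. \<phi> X $ b $ d = (\<Sum>a\<in>UNIV. \<Sum>c\<in>UNIV. X $ a $ c * \<phi> (Em a c) $ b $ d))"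

lemma if01_mult[simp]: "x * (if P then 1 else 0) = (if P then x else (0::complex))"
   "(if P then 1 else 0) * x = (if P then x else (0::complex))" by auto

lemma kmap_cons: "kmap (C # Cs) X = adj C ** X ** C + kmap Cs X"
  by (simp add: kmap_def)

lemma alpha_nth: "(adj C ** X ** C) $ b $ d = (\<Sum>c\<in>UNIV. \<Sum>a\<in>UNIV. cnj (C $ a $ b) * X $ a $ c * C $ c $ d)"
  using kmap_nth[of "[C]" X b d] by (simp add: kmap_def)

lemma alpha_Em: "(adj C ** Em a' c' ** C) $ b $ d = cnj (C $ a' $ b) * C $ c' $ d"
proof -
  have "(\<Sum>a\<in>UNIV. cnj (C $ a $ b) * Em a' c' $ a $ c * C $ c $ d) = (if c = c' then cnj (C $ a' $ b) * C $ c $ d else 0)" for c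
  proof -
    have "(\<Sum>a\<in>UNIV. cnj (C $ a $ b) * Em a' c' $ a $ c * C $ c $ d) = (\<Sum>a\<in>UNIV. if a = a' then (if c = c' then cnj (C $ a' $ b) * C $ c $ d else 0) else 0)"
      by (intro sum.cong) (auto simp: Em_def)
    then show ?thesis by simp
  qed
  then show ?thesis by (simp add: alpha_nth)
qed

lemma Gm_kmap: "Gm (kmap Cs) p q = (\<Sum>C\<leftarrow>Cs. cnj (vecm C p) * vecm C q)"
  by (induction Cs) (simp_all add: Gm_def kmap_def alpha_Em vecm_def)

lemma hform_add: "hform (\<lambda>p q. A p q + B p q) v = hform A v + hform B v"
  by (simp add: hform_def algebra_simps sum.distrib)

lemma hform_zero: "hform (\<lambda>p q. 0) v = 0"
  by (simp add: hform_def)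

lemma hform_rank:
  "hform (\<lambda>p q. \<Sum>x\<leftarrow>xs. cnj (x p) * x q) v = (\<Sum>x\<leftarrow>xs. of_real (cmod (\<Sum>q\<in>UNIV. cnj (v q) * x q) ^ 2))"
proof (induction xs)
  case Nil
  then show ?case using hform_zero by simp
next
  case (Cons x xs)
  have "hform (\<lambda>p q. cnj (x p) * x q) v = cnj (\<Sum>q\<in>UNIV. cnj (v q) * x q) * (\<Sum>q\<in>UNIV. cnj (v q) * x q)"
  proof -
    have "hform (\<lambda>p q. cnj (x p) * x q) v = (\<Sum>p\<in>UNIV. v p * cnj (x p)) * (\<Sum>q\<in>UNIV. cnj (v q) * x q)"
      unfolding hform_def sum_product by (intro sum.cong refl) (simp add: ac_simps)
    then show ?thesis by simp
  qed
  also have "\<dots> = of_real (cmod (\<Sum>q\<in>UNIV. cnj (v q) * x q) ^ 2)"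
    by (simp only: complex_norm_square mult.commute)
  finally show ?case using Cons hform_add[of "\<lambda>p q. cnj (x p) * x q"] by simp
qed

lemma Qf_kmap: "Qf (kmap Cs) Y = of_real (\<Sum>C\<leftarrow>Cs. cmod (fip Y C) ^ 2)"
proof -
  have gk: "Gm (kmap Cs) = (\<lambda>p q. \<Sum>C\<leftarrow>Cs. cnj (vecm C p) * vecm C q)" by (simp add: fun_eq_iff Gm_kmap)
  have "(\<Sum>x\<leftarrow>map vecm Cs. complex_of_real (cmod (\<Sum>q\<in>UNIV. cnj (vecm Y q) * x q) ^ 2))
    = of_real (\<Sum>C\<leftarrow>Cs. cmod (\<Sum>p\<in>UNIV. cnj (vecm Y p) * vecm C p) ^ 2)"
    by (induction Cs) simp_all
  then show ?thesis using hform_rank[of "map vecm Cs" "vecm Y"] by (simp add: o_def gk Qf_def fip_def)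
qed

lemma expand_kmap: "expand (kmap Cs)"
  unfolding expand_def
proof (intro allI)
  fix X b d
  show "kmap Cs X $ b $ d = (\<Sum>a\<in>UNIV. \<Sum>c\<in>UNIV. X $ a $ c * kmap Cs (Em a c) $ b $ d)"
  proof (induction Cs)
    case Nil
    then show ?case by (simp add: kmap_def)
  next
    case (Cons C Cs)
    have "(adj C ** X ** C) $ b $ d = (\<Sum>a\<in>UNIV. \<Sum>c\<in>UNIV. X $ a $ c * (adj C ** Em a c ** C) $ b $ d)"
      unfolding alpha_Em alpha_nth[of C X] by (subst sum.swap) (simp add: algebra_simps)
    then show ?case using Cons by (simp add: kmap_cons algebra_simps sum.distrib)
  qed
qed

lemma expand_eq:
  assumes "expand \<phi>" "expand \<psi>" "\<And>p q. Gm \<phi> p q = Gm \<psi> p q"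
  shows "\<phi> = \<psi>"
proof (rule ext)
  fix X
  have "\<phi> (Em a c) $ b $ d = \<psi> (Em a c) $ b $ d" for a b c d
    using assms(3)[of "(a,b)" "(c,d)"] by (simp add: Gm_def)
  moreover have "\<phi> X $ b $ d = (\<Sum>a\<in>UNIV. \<Sum>c\<in>UNIV. X $ a $ c * \<phi> (Em a c) $ b $ d)" for b d
    using assms(1) unfolding expand_def by blast
  moreover have "\<psi> X $ b $ d = (\<Sum>a\<in>UNIV. \<Sum>c\<in>UNIV. X $ a $ c * \<psi> (Em a c) $ b $ d)" for b d
    using assms(2) unfolding expand_def by blast
  ultimately show "\<phi> X = \<psi> X" by (simp add: vec_eq_iff)
qed

lemma kraus_exists:
  assumes "expand \<phi>" "\<And>Y. Im (Qf \<phi> Y) = 0 \<and> Re (Qf \<phi> Y) \<ge> 0"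
  shows "\<exists>Cs. kraus_decomp \<phi> Cs"
proof -
  have "psdm (Gm \<phi>)" unfolding psdm_def
  proof
    fix v :: "'a \<times> 'a \<Rightarrow> complex"
    show "Im (hform (Gm \<phi>) v) = 0 \<and> 0 \<le> Re (hform (Gm \<phi>) v)"
      using assms(2)[of "unvec v"] by (simp add: Qf_def)
  qed
  from psdm_decomp[OF this] obtain xs where xs: "\<And>p q. Gm \<phi> p q = (\<Sum>x\<leftarrow>xs. cnj (x p) * x q)" by blast
  define Cs where "Cs = map unvec xs"
  have "Gm \<phi> p q = Gm (kmap Cs) p q" for p q
    unfolding xs Gm_kmap Cs_def by (simp add: o_def)
  then have "\<phi> = kmap Cs" using expand_eq[OF assms(1) expand_kmap] by blast
  then show ?thesis unfolding kraus_decomp_def kmap_def by blast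
qed



lemma cinner_add_right: "cinner u (x + y) = cinner u x + cinner u y"
  by (simp add: cinner_def sum.distrib algebra_simps)

lemma cinner_adj: "cinner u (adj C *v w) = cinner (C *v u) (w :: complex^'m::finite)"
proof -
  have "cinner u (adj C *v w) = (\<Sum>l\<in>UNIV. \<Sum>k\<in>UNIV. cnj (u $ l) * (cnj (C $ k $ l) * w $ k))"
    by (simp add: cinner_def matrix_vector_mult_def sum_distrib_left)
  also have "\<dots> = (\<Sum>k\<in>UNIV. \<Sum>l\<in>UNIV. cnj (u $ l) * (cnj (C $ k $ l) * w $ k))"
    by (rule sum.swap)
  also have "\<dots> = cinner (C *v u) w"
    by (simp add: cinner_def matrix_vector_mult_def sum_distrib_left algebra_simps)
  finally show ?thesis .
qed

definition bval :: "nat \<Rightarrow> (nat \<Rightarrow> nat \<Rightarrow> ('m::finite) cmat) \<Rightarrow> (nat \<Rightarrow> complex^'m) \<Rightarrow> complex" where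
  "bval k B v = (\<Sum>i<k. \<Sum>j<k. cinner (v i) (B i j *v v j))"

lemma psd_block_bval: "psd_block k B \<longleftrightarrow> (\<forall>v. Im (bval k B v) = 0 \<and> Re (bval k B v) \<ge> 0)"
  by (simp add: psd_block_def bval_def Let_def)

lemma bval_add: "bval k (\<lambda>i j. B i j + B' i j) v = bval k B v + bval k B' v"
  by (simp add: bval_def matrix_vector_mult_add_rdistrib cinner_add_right sum.distrib)

lemma bval_alpha: "bval k (\<lambda>i j. adj C ** B i j ** C) v = bval k B (\<lambda>i. C *v v i)"
  unfolding bval_def by (simp add: matrix_vector_mul_assoc[symmetric] cinner_adj)

lemma kmap_cp: "completely_positive (kmap Cs)"
  unfolding completely_positive_def
proof (intro allI impI)
  fix k B assume B: "psd_block k (B :: nat \<Rightarrow> nat \<Rightarrow> 'a cmat)"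
  show "psd_block k (\<lambda>i j. kmap Cs (B i j))"
  proof (induction Cs)
    case Nil
    then show ?case by (simp add: psd_block_bval bval_def kmap_def cinner_def)
  next
    case (Cons C Cs)
    have "bval k (\<lambda>i j. kmap (C # Cs) (B i j)) v = bval k B (\<lambda>i. C *v v i) + bval k (\<lambda>i j. kmap Cs (B i j)) v" for v
      unfolding kmap_cons bval_add bval_alpha ..
    then show ?case using Cons B unfolding psd_block_bval by simp
  qed
qed

lemma kraus_cp: "kraus_decomp \<phi> Cs \<Longrightarrow> completely_positive \<phi>"
proof -
  assume "kraus_decomp \<phi> Cs"
  then have "\<phi> = kmap Cs" by (simp add: kraus_decomp_def kmap_def fun_eq_iff)
  then show ?thesis using kmap_cp by simp
qed

lemma sum_pair: "(\<Sum>p\<in>UNIV. g p) = (\<Sum>a\<in>UNIV. \<Sum>b\<in>UNIV. g (a, b))"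
  by (simp add: sum.cartesian_product UNIV_Times_UNIV[symmetric] del: UNIV_Times_UNIV)

lemma Em_mv: "(Em a c *v u) $ l = (if l = a then u $ c else 0)"
proof -
  have "(\<Sum>k\<in>UNIV. Em a c $ l $ k * u $ k) = (\<Sum>k\<in>UNIV. if k = c then (if l = a then u $ c else 0) else 0)"
    by (intro sum.cong) (auto simp: Em_def)
  then show ?thesis by (simp add: matrix_vector_mult_def)
qed

lemma cinner_Em: "cinner w (Em a c *v u) = cnj (w $ a) * u $ c"
proof -
  have "cinner w (Em a c *v u) = (\<Sum>l\<in>UNIV. if l = a then cnj (w $ a) * u $ c else 0)"
    unfolding cinner_def Em_mv by (intro sum.cong) auto
  then show ?thesis by simp
qed

lemma cp_Qf:
  fixes \<phi> :: "('m::finite) cmat \<Rightarrow> 'm cmat"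
  assumes "completely_positive \<phi>"
  shows "Im (Qf \<phi> Y) = 0 \<and> Re (Qf \<phi> Y) \<ge> 0"
proof -
  define k where "k = CARD('m)"
  obtain e where e: "bij_betw e {0..<k} (UNIV :: 'm set)"
    using ex_bij_betw_nat_finite[of "UNIV :: 'm set"] k_def by auto
  have re: "(\<Sum>i<k. h (e i)) = (\<Sum>a\<in>UNIV. h a)" for h :: "'m \<Rightarrow> complex"
    using sum.reindex_bij_betw[OF e, of h] by (simp add: lessThan_atLeast0)
  have re2: "(\<Sum>i<k. \<Sum>j<k. F (e i) (e j)) = (\<Sum>a\<in>UNIV. \<Sum>c\<in>UNIV. F a c)" for F :: "'m \<Rightarrow> 'm \<Rightarrow> complex"
  proof -
    have "(\<Sum>j<k. F x (e j)) = (\<Sum>c\<in>UNIV. F x c)" for x using re[of "F x"] by simp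
    then have "(\<Sum>i<k. \<Sum>j<k. F (e i) (e j)) = (\<Sum>i<k. (\<lambda>a. \<Sum>c\<in>UNIV. F a c) (e i))" by simp
    also have "\<dots> = (\<Sum>a\<in>UNIV. \<Sum>c\<in>UNIV. F a c)" by (rule re)
    finally show ?thesis .
  qed
  define B where "B = (\<lambda>i j. Em (e i) (e j) :: 'm cmat)"
  have "psd_block k B" unfolding psd_block_bval
  proof
    fix w :: "nat \<Rightarrow> complex^'m"
    have "bval k B w = (\<Sum>i<k. \<Sum>j<k. cnj (w i $ e i) * (w j $ e j))"
      unfolding bval_def B_def cinner_Em ..
    also have "\<dots> = cnj (\<Sum>i<k. w i $ e i) * (\<Sum>j<k. w j $ e j)"
      by (simp add: sum_product)
    also have "\<dots> = of_real (cmod (\<Sum>j<k. w j $ e j) ^ 2)"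
      by (simp only: complex_norm_square mult.commute)
    finally show "Im (bval k B w) = 0 \<and> 0 \<le> Re (bval k B w)" by simp
  qed
  then have P: "psd_block k (\<lambda>i j. \<phi> (B i j))" using assms unfolding completely_positive_def by blast
  define w where "w = (\<lambda>i. \<chi> b. cnj (Y $ e i $ b))"
  have "bval k (\<lambda>i j. \<phi> (B i j)) w = (\<Sum>i<k. \<Sum>j<k. \<Sum>b\<in>UNIV. \<Sum>d\<in>UNIV. Y $ e i $ b * cnj (Y $ e j $ d) * \<phi> (Em (e i) (e j)) $ b $ d)"
    unfolding bval_def B_def w_def cinner_def by (simp add: matrix_vector_mult_def sum_distrib_left ac_simps)
  also have "\<dots> = (\<Sum>a\<in>UNIV. \<Sum>c\<in>UNIV. \<Sum>b\<in>UNIV. \<Sum>d\<in>UNIV. Y $ a $ b * cnj (Y $ c $ d) * \<phi> (Em a c) $ b $ d)"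
    using re2[of "\<lambda>a c. \<Sum>b\<in>UNIV. \<Sum>d\<in>UNIV. Y $ a $ b * cnj (Y $ c $ d) * \<phi> (Em a c) $ b $ d"] by simp
  also have "\<dots> = Qf \<phi> Y"
  proof -
    have "(\<Sum>a\<in>UNIV. \<Sum>c\<in>UNIV. \<Sum>b\<in>UNIV. \<Sum>d\<in>UNIV. Y $ a $ b * cnj (Y $ c $ d) * \<phi> (Em a c) $ b $ d)
       = (\<Sum>a\<in>UNIV. \<Sum>b\<in>UNIV. \<Sum>c\<in>UNIV. \<Sum>d\<in>UNIV. Y $ a $ b * cnj (Y $ c $ d) * \<phi> (Em a c) $ b $ d)"
      by (rule sum.cong[OF refl], rule sum.swap)
    then show ?thesis unfolding Qf_def hform_def sum_pair Gm_def vecm_def by simp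
  qed
  finally show ?thesis using P unfolding psd_block_bval by metis
qed



lemma fip_nested: "fip Y X = (\<Sum>a\<in>UNIV. \<Sum>b\<in>UNIV. cnj (Y $ a $ b) * X $ a $ b)"
  unfolding fip_def sum_pair vecm_def by simp

lemma inner_fip: "inner Y X = Re (fip Y (X :: ('m::finite) cmat))"
  unfolding fip_nested by (simp add: inner_vec_def inner_complex_def Re_sum)

lemma fip_cscale: "fip Y (cscale c X) = c * fip Y X"
  unfolding fip_nested by (simp add: sum_distrib_left ac_simps)

lemma fip_add: "fip Y (X + Z) = fip Y X + fip Y Z"
  unfolding fip_nested by (simp add: sum.distrib algebra_simps)

lemma real_subspace_cspan: "subspace (cv.span (S :: ('m::finite) cmat set))"
  unfolding subspace_def
  by (auto simp: cv.span_zero cv.span_add scaleR_cscale intro: cv.span_scale)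

lemma orth:
  fixes X :: "('m::finite) cmat"
  assumes "X \<notin> cv.span S"
  shows "\<exists>Y. (\<forall>v\<in>S. fip Y v = 0) \<and> fip Y X \<noteq> 0"
proof -
  define S' where "S' = S \<union> (cscale \<i>) ` S"
  have sub: "span S' \<subseteq> cv.span S"
    by (rule span_minimal) (auto simp: S'_def real_subspace_cspan intro: cv.span_base cv.span_scale)
  obtain y z where y: "y \<in> span S'" and z: "\<And>w. w \<in> span S' \<Longrightarrow> orthogonal z w" and X: "X = y + z"
    using orthogonal_subspace_decomp_exists[of S' X] by blast
  have "z \<noteq> 0" using X y sub assms by auto
  have "Re (fip z X) = inner z X" by (simp add: inner_fip)
  also have "\<dots> = inner z y + inner z z" by (simp add: X inner_add_right)
  also have "inner z y = 0" using z[OF y] by (simp add: orthogonal_def)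
  finally have "Re (fip z X) = inner z z" by simp
  then have "fip z X \<noteq> 0" using \<open>z \<noteq> 0\<close> by auto
  moreover have "fip z v = 0" if "v \<in> S" for v
  proof -
    have "v \<in> span S'" "cscale \<i> v \<in> span S'" using that by (auto simp: S'_def intro: span_base)
    then have "inner z v = 0" "inner z (cscale \<i> v) = 0" using z by (auto simp: orthogonal_def)
    then have "Re (fip z v) = 0" "Re (\<i> * fip z v) = 0" by (simp_all add: inner_fip fip_cscale)
    then show ?thesis by (simp add: complex_eq_iff)
  qed
  ultimately show ?thesis by blast
qed



lemma entry_series:
  fixes L :: "nat \<Rightarrow> ('m::finite) cmat list"
  assumes "summable (\<lambda>n. c n *\<^sub>R Blinfun (kmap (L n)))"
  shows "summable (\<lambda>n. of_real (c n) * kmap (L n) X $ b $ d)"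
    and "blinfun_apply (\<Sum>n. c n *\<^sub>R Blinfun (kmap (L n))) X $ b $ d = (\<Sum>n. of_real (c n) * kmap (L n) X $ b $ d)"
proof -
  define h where "h = (\<lambda>F :: 'm cmat \<Rightarrow>\<^sub>L 'm cmat. blinfun_apply F X $ b $ d)"
  have bl: "bounded_linear h" unfolding h_def
    by (intro bounded_linear_compose[OF bounded_linear_vec_nth] bounded_linear_compose[OF bounded_linear_vec_nth] blinfun.bounded_linear_left)
  have hn: "h (c n *\<^sub>R Blinfun (kmap (L n))) = of_real (c n) * kmap (L n) X $ b $ d" for n
    unfolding h_def by (simp add: blinfun.scaleR_left bounded_linear_Blinfun_apply[OF bl_kmap] scaleR_nth2 del: vector_scaleR_component)
  show "summable (\<lambda>n. of_real (c n) * kmap (L n) X $ b $ d)"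
    using bounded_linear.summable[OF bl assms] unfolding hn .
  show "blinfun_apply (\<Sum>n. c n *\<^sub>R Blinfun (kmap (L n))) X $ b $ d = (\<Sum>n. of_real (c n) * kmap (L n) X $ b $ d)"
  proof -
    have "h (\<Sum>n. c n *\<^sub>R Blinfun (kmap (L n))) = (\<Sum>n. h (c n *\<^sub>R Blinfun (kmap (L n))))"
      by (rule bounded_linear.suminf[OF bl assms])
    then show ?thesis unfolding hn by (simp add: h_def)
  qed
qed

lemma Qf_series:
  fixes \<phi> :: "('m::finite) cmat \<Rightarrow> 'm cmat"
  assumes sm: "\<And>X b d. summable (\<lambda>n. of_real (c n) * f n X $ b $ d)"
    and eq: "\<And>X b d. \<phi> X $ b $ d = (\<Sum>n. of_real (c n) * f n X $ b $ d)"
  shows "summable (\<lambda>n. of_real (c n) * Qf (f n) Y)" "Qf \<phi> Y = (\<Sum>n. of_real (c n) * Qf (f n) Y)"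
proof -
  define K where "K = (\<lambda>p q. vecm Y p * cnj (vecm Y q))"
  define a where "a = (\<lambda>n p q. of_real (c n) * f n (Em (fst p) (fst q)) $ snd p $ snd q)"
  have s1: "summable (\<lambda>n. K p q * a n p q)" for p q
    unfolding a_def by (intro summable_mult sm)
  have qn: "of_real (c n) * Qf (f n) Y = (\<Sum>p\<in>UNIV. \<Sum>q\<in>UNIV. K p q * a n p q)" for n
    unfolding Qf_def hform_def Gm_def K_def a_def by (simp add: sum_distrib_left ac_simps)
  show "summable (\<lambda>n. of_real (c n) * Qf (f n) Y)"
    unfolding qn by (intro summable_sum s1)
  have "Qf \<phi> Y = (\<Sum>p\<in>UNIV. \<Sum>q\<in>UNIV. K p q * (\<Sum>n. a n p q))"
    unfolding Qf_def hform_def Gm_def K_def a_def eq by simp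
  also have "\<dots> = (\<Sum>p\<in>UNIV. \<Sum>q\<in>UNIV. \<Sum>n. K p q * a n p q)"
    by (intro sum.cong refl) (unfold a_def, rule suminf_mult[symmetric], rule sm)
  also have "\<dots> = (\<Sum>p\<in>UNIV. \<Sum>n. \<Sum>q\<in>UNIV. K p q * a n p q)"
    by (intro sum.cong refl) (rule suminf_sum[symmetric], rule s1)
  also have "\<dots> = (\<Sum>n. \<Sum>p\<in>UNIV. \<Sum>q\<in>UNIV. K p q * a n p q)"
    by (rule suminf_sum[symmetric], intro summable_sum s1)
  finally show "Qf \<phi> Y = (\<Sum>n. of_real (c n) * Qf (f n) Y)" unfolding qn .
qed

lemma expand_series:
  fixes \<phi> :: "('m::finite) cmat \<Rightarrow> 'm cmat"
  assumes sm: "\<And>X b d. summable (\<lambda>n. of_real (c n) * f n X $ b $ d)"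
    and eq: "\<And>X b d. \<phi> X $ b $ d = (\<Sum>n. of_real (c n) * f n X $ b $ d)"
    and ex: "\<And>n. expand (f n)"
  shows "expand \<phi>"
  unfolding expand_def
proof (intro allI)
  fix X b d
  define a where "a = (\<lambda>n x y. of_real (c n) * f n (Em x y) $ b $ d)"
  have s1: "summable (\<lambda>n. X $ x $ y * a n x y)" for x y
    unfolding a_def by (intro summable_mult sm)
  have fn: "of_real (c n) * f n X $ b $ d = (\<Sum>x\<in>UNIV. \<Sum>y\<in>UNIV. X $ x $ y * a n x y)" for n
  proof -
    have "f n X $ b $ d = (\<Sum>x\<in>UNIV. \<Sum>y\<in>UNIV. X $ x $ y * f n (Em x y) $ b $ d)"
      using ex[of n] unfolding expand_def by blast
    then show ?thesis unfolding a_def by (simp add: sum_distrib_left ac_simps)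
  qed
  have "\<phi> X $ b $ d = (\<Sum>n. \<Sum>x\<in>UNIV. \<Sum>y\<in>UNIV. X $ x $ y * a n x y)"
    unfolding eq fn ..
  also have "\<dots> = (\<Sum>x\<in>UNIV. \<Sum>n. \<Sum>y\<in>UNIV. X $ x $ y * a n x y)"
    by (rule suminf_sum, intro summable_sum s1)
  also have "\<dots> = (\<Sum>x\<in>UNIV. \<Sum>y\<in>UNIV. \<Sum>n. X $ x $ y * a n x y)"
    by (intro sum.cong refl) (rule suminf_sum, rule s1)
  also have "\<dots> = (\<Sum>x\<in>UNIV. \<Sum>y\<in>UNIV. X $ x $ y * \<phi> (Em x y) $ b $ d)"
  proof (intro sum.cong refl)
    fix x y
    show "(\<Sum>n. X $ x $ y * a n x y) = X $ x $ y * \<phi> (Em x y) $ b $ d"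
      unfolding eq[of "Em x y"] a_def by (rule suminf_mult, rule sm)
  qed
  finally show "\<phi> X $ b $ d = (\<Sum>x\<in>UNIV. \<Sum>y\<in>UNIV. X $ x $ y * \<phi> (Em x y) $ b $ d)" .
qed



lemma sum_list_ge: "x \<in> set xs \<Longrightarrow> (\<And>y. 0 \<le> f y) \<Longrightarrow> f x \<le> (\<Sum>y\<leftarrow>xs. f y :: real)"
proof (induction xs)
  case Nil then show ?case by simp
next
  case (Cons a xs)
  show ?case
  proof (cases "x = a")
    case True
    then show ?thesis using Cons.prems sum_list_nonneg[of "map f xs"] by force
  next
    case False
    then show ?thesis using Cons by (simp add: add_increasing)
  qed
qed

lemma sum_list_zero: "(\<And>y. y \<in> set xs \<Longrightarrow> f y = 0) \<Longrightarrow> (\<Sum>y\<leftarrow>xs. f y :: real) = 0"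
  by (induction xs) auto

lemma Qf_diff: "Qf (\<lambda>X. \<phi> X - q *\<^sub>R \<psi> X) Y = Qf \<phi> Y - of_real q * Qf \<psi> (Y :: ('m::finite) cmat)"
  unfolding Qf_def hform_def Gm_def
  by (simp add: scaleR_nth2 algebra_simps sum_subtractf sum_distrib_left del: vector_scaleR_component)

lemma expand_diff:
  assumes "expand \<phi>" "expand \<psi>"
  shows "expand (\<lambda>X. \<phi> X - q *\<^sub>R \<psi> (X :: ('m::finite) cmat))"
  unfolding expand_def
proof (intro allI)
  fix X :: "'m cmat" and b d
  have 1: "\<phi> X $ b $ d = (\<Sum>x\<in>UNIV. \<Sum>y\<in>UNIV. X $ x $ y * \<phi> (Em x y) $ b $ d)"
    using assms(1) unfolding expand_def by blast
  have 2: "\<psi> X $ b $ d = (\<Sum>x\<in>UNIV. \<Sum>y\<in>UNIV. X $ x $ y * \<psi> (Em x y) $ b $ d)"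
    using assms(2) unfolding expand_def by blast
  show "(\<phi> X - q *\<^sub>R \<psi> X) $ b $ d = (\<Sum>x\<in>UNIV. \<Sum>y\<in>UNIV. X $ x $ y * (\<phi> (Em x y) - q *\<^sub>R \<psi> (Em x y)) $ b $ d)"
    by (simp add: 1 2 scaleR_nth2 algebra_simps sum_subtractf sum_distrib_left del: vector_scaleR_component)
qed

lemma alpha_kmap: "alpha A = kmap [A]"
  by (simp add: fun_eq_iff alpha_def kmap_def)

lemma fip_zero: "fip Y 0 = 0"
  by (simp add: fip_nested)

lemma fip_sum: "fip Y (sum g t) = (\<Sum>v\<in>t. fip Y (g v))"
  by (induction t rule: infinite_finite_induct) (simp_all add: fip_add fip_zero)



lemma main_abstract:
  fixes L :: "nat \<Rightarrow> ('m::finite) cmat list" and c :: "nat \<Rightarrow> real"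
  assumes cpos: "\<And>n. c n > 0" and summ: "summable (\<lambda>n. c n *\<^sub>R Blinfun (kmap (L n)))"
    and sig: "\<sigma> = blinfun_apply (\<Sum>n. c n *\<^sub>R Blinfun (kmap (L n)))"
  shows "coeff_space \<sigma> = cv.span (\<Union>n. set (L n))"
    and "\<And>A. A \<in> cv.span (\<Union>n. set (L n)) \<longleftrightarrow> (\<exists>q>0. completely_positive (\<lambda>X. \<sigma> X - q *\<^sub>R alpha A X))"
proof -
  define W where "W = (\<Union>n. set (L n))"
  have ent1: "\<And>X b d. summable (\<lambda>n. of_real (c n) * kmap (L n) X $ b $ d)"
    using entry_series(1)[OF summ] .
  have ent2: "\<And>X b d. \<sigma> X $ b $ d = (\<Sum>n. of_real (c n) * kmap (L n) X $ b $ d)"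
    using entry_series(2)[OF summ] sig by simp
  have exs: "expand \<sigma>" by (rule expand_series[where c=c and f="\<lambda>n. kmap (L n)", OF ent1 ent2 expand_kmap])
  define r where "r = (\<lambda>Y n. \<Sum>C\<leftarrow>L n. cmod (fip Y C) ^ 2)"
  have rnn: "r Y n \<ge> 0" for Y n unfolding r_def by (intro sum_list_nonneg) auto
  have QY: "summable (\<lambda>n. c n * r Y n) \<and> Qf \<sigma> Y = of_real (\<Sum>n. c n * r Y n)" for Y
  proof -
    have e: "of_real (c n) * Qf (kmap (L n)) Y = of_real (c n * r Y n)" for n
      by (simp add: Qf_kmap r_def)
    have s: "summable (\<lambda>n. c n * r Y n)"
      using Qf_series(1)[where c=c and f="\<lambda>n. kmap (L n)" and \<phi>=\<sigma> and Y=Y, OF ent1 ent2] unfolding e summable_of_real_iff .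
    have "Qf \<sigma> Y = (\<Sum>n. of_real (c n * r Y n))"
      using Qf_series(2)[where c=c and f="\<lambda>n. kmap (L n)" and \<phi>=\<sigma> and Y=Y, OF ent1 ent2] unfolding e .
    also have "\<dots> = of_real (\<Sum>n. c n * r Y n)" by (rule suminf_of_real[OF s, symmetric])
    finally show ?thesis using s by simp
  qed
  have sum_nn: "(\<Sum>n. c n * r Y n) \<ge> 0" for Y
    using QY[of Y] by (intro suminf_nonneg) (auto intro: mult_nonneg_nonneg less_imp_le cpos rnn)
  have "\<exists>Cs. kraus_decomp \<sigma> Cs"
    by (rule kraus_exists[OF exs]) (simp add: QY sum_nn)
  define Cs0 where "Cs0 = (SOME Cs. kraus_decomp \<sigma> Cs)"
  have kd: "kraus_decomp \<sigma> Cs0" unfolding Cs0_def by (rule someI_ex) fact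
  have sk: "\<sigma> = kmap Cs0" using kd by (simp add: kraus_decomp_def kmap_def fun_eq_iff)
  have cs: "coeff_space \<sigma> = cv.span (set Cs0)" unfolding coeff_space_def Cs0_def ..
  have key: "(\<Sum>C\<leftarrow>Cs0. cmod (fip Y C) ^ 2) = (\<Sum>n. c n * r Y n)" for Y
    using QY[of Y] Qf_kmap[of Cs0 Y] sk by simp
  have rW: "r Y n = 0" if "\<forall>v\<in>W. fip Y v = 0" for Y n
    unfolding r_def using that W_def by (intro sum_list_zero) auto
  have span_eq: "cv.span (set Cs0) = cv.span W"
  proof
    have "set Cs0 \<subseteq> cv.span W"
    proof
      fix C assume C: "C \<in> set Cs0"
      show "C \<in> cv.span W"
      proof (rule ccontr)
        assume "C \<notin> cv.span W"
        from orth[OF this] obtain Y where Y: "\<forall>v\<in>W. fip Y v = 0" "fip Y C \<noteq> 0" by blast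
        have "(\<Sum>n. c n * r Y n) = 0" using rW[OF Y(1)] by simp
        moreover have "cmod (fip Y C) ^ 2 \<le> (\<Sum>C\<leftarrow>Cs0. cmod (fip Y C) ^ 2)"
          by (rule sum_list_ge[OF C]) simp
        ultimately show False using key[of Y] Y(2) by simp
      qed
    qed
    then show "cv.span (set Cs0) \<subseteq> cv.span W" by (intro cv.span_minimal) auto
  next
    have "W \<subseteq> cv.span (set Cs0)"
    proof
      fix C assume "C \<in> W"
      then obtain n where C: "C \<in> set (L n)" unfolding W_def by blast
      show "C \<in> cv.span (set Cs0)"
      proof (rule ccontr)
        assume "C \<notin> cv.span (set Cs0)"
        from orth[OF this] obtain Y where Y: "\<forall>v\<in>set Cs0. fip Y v = 0" "fip Y C \<noteq> 0" by blast
        have "(\<Sum>C\<leftarrow>Cs0. cmod (fip Y C) ^ 2) = 0" using Y(1) by (intro sum_list_zero) auto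
        moreover have "c n * r Y n \<le> (\<Sum>n. c n * r Y n)"
          using sum_le_suminf[of "\<lambda>n. c n * r Y n" "{n}"] QY[of Y] cpos rnn
          by (simp add: less_imp_le)
        moreover have "cmod (fip Y C) ^ 2 \<le> r Y n" unfolding r_def by (rule sum_list_ge[OF C]) simp
        moreover have "cmod (fip Y C) ^ 2 > 0" using Y(2) by simp
        ultimately have "r Y n > 0" "(\<Sum>n. c n * r Y n) = 0" "c n * r Y n \<le> (\<Sum>n. c n * r Y n)"
          using key[of Y] by linarith+
        moreover have "c n * r Y n > 0" using cpos[of n] \<open>r Y n > 0\<close> by simp
        ultimately show False by linarith
      qed
    qed
    then show "cv.span W \<subseteq> cv.span (set Cs0)" by (intro cv.span_minimal) auto
  qed
  show "coeff_space \<sigma> = cv.span (\<Union>n. set (L n))" using cs span_eq W_def by simp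
  fix A
  show "A \<in> cv.span (\<Union>n. set (L n)) \<longleftrightarrow> (\<exists>q>0. completely_positive (\<lambda>X. \<sigma> X - q *\<^sub>R alpha A X))"
  proof
    assume "A \<in> cv.span (\<Union>n. set (L n))"
    then have "A \<in> cv.span (set Cs0)" using span_eq W_def by simp
    then obtain t rr where t: "finite t" "t \<subseteq> set Cs0" and A: "A = (\<Sum>v\<in>t. cscale (rr v) v)"
      unfolding cv.span_explicit by blast
    define R where "R = (\<Sum>v\<in>t. cmod (rr v))"
    have R0: "R \<ge> 0" unfolding R_def by (simp add: sum_nonneg)
    define q where "q = 1 / (R ^ 2 + 1)"
    have q0: "q > 0" unfolding q_def by (simp add: add_pos_nonneg add.commute)
    have bound: "q * cmod (fip Y A) ^ 2 \<le> (\<Sum>C\<leftarrow>Cs0. cmod (fip Y C) ^ 2)" for Y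
    proof -
      define S where "S = (\<Sum>C\<leftarrow>Cs0. cmod (fip Y C) ^ 2)"
      have S0: "S \<ge> 0" unfolding S_def by (intro sum_list_nonneg) auto
      have le: "cmod (fip Y v) \<le> sqrt S" if "v \<in> t" for v
      proof -
        have "cmod (fip Y v) ^ 2 \<le> S" unfolding S_def using that t(2) by (intro sum_list_ge) auto
        then show ?thesis by (simp add: real_le_rsqrt)
      qed
      have "cmod (fip Y A) = cmod (\<Sum>v\<in>t. rr v * fip Y v)" unfolding A fip_sum fip_cscale ..
      also have "\<dots> \<le> (\<Sum>v\<in>t. cmod (rr v) * cmod (fip Y v))"
        by (rule order_trans[OF norm_sum]) (simp add: norm_mult)
      also have "\<dots> \<le> (\<Sum>v\<in>t. cmod (rr v) * sqrt S)"
        by (intro sum_mono mult_left_mono le) auto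
      also have "\<dots> = R * sqrt S" unfolding R_def by (simp add: sum_distrib_right)
      finally have "cmod (fip Y A) ^ 2 \<le> (R * sqrt S) ^ 2" by (intro power_mono) auto
      also have "\<dots> = R ^ 2 * S" using S0 by (simp add: power_mult_distrib)
      finally have "cmod (fip Y A) ^ 2 \<le> R ^ 2 * S" .
      then have "q * cmod (fip Y A) ^ 2 \<le> q * (R ^ 2 * S)" using q0 by (intro mult_left_mono) auto
      also have "\<dots> \<le> S"
      proof -
        have d: "R ^ 2 + 1 > 0" by (simp add: add_pos_nonneg add.commute)
        have "q * R ^ 2 \<le> 1" unfolding q_def using d by (simp add: field_simps)
        then have "(q * R ^ 2) * S \<le> 1 * S" using S0 by (intro mult_right_mono) auto
        then show ?thesis by (simp add: ac_simps)
      qed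
      finally show ?thesis unfolding S_def .
    qed
    define \<psi> where "\<psi> = (\<lambda>X. \<sigma> X - q *\<^sub>R alpha A X)"
    have exps: "expand \<psi>" unfolding \<psi>_def alpha_kmap by (rule expand_diff[OF exs expand_kmap])
    have "Im (Qf \<psi> Y) = 0 \<and> Re (Qf \<psi> Y) \<ge> 0" for Y
    proof -
      have "Qf \<psi> Y = of_real ((\<Sum>C\<leftarrow>Cs0. cmod (fip Y C) ^ 2) - q * cmod (fip Y A) ^ 2)"
        unfolding \<psi>_def Qf_diff alpha_kmap Qf_kmap sk by simp
      then show ?thesis using bound[of Y] by simp
    qed
    from kraus_exists[OF exps this] obtain Cs where "kraus_decomp \<psi> Cs" by blast
    then have "completely_positive \<psi>" by (rule kraus_cp)
    then show "\<exists>q>0. completely_positive (\<lambda>X. \<sigma> X - q *\<^sub>R alpha A X)" using q0 unfolding \<psi>_def by blast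
  next
    assume "\<exists>q>0. completely_positive (\<lambda>X. \<sigma> X - q *\<^sub>R alpha A X)"
    then obtain q where q: "q > 0" "completely_positive (\<lambda>X. \<sigma> X - q *\<^sub>R alpha A X)" by blast
    show "A \<in> cv.span (\<Union>n. set (L n))"
    proof (rule ccontr)
      assume "A \<notin> cv.span (\<Union>n. set (L n))"
      from orth[OF this] obtain Y where Y: "\<forall>v\<in>W. fip Y v = 0" "fip Y A \<noteq> 0" unfolding W_def by blast
      have "Qf \<sigma> Y = 0" using QY[of Y] rW[OF Y(1)] by simp
      then have "Qf (\<lambda>X. \<sigma> X - q *\<^sub>R alpha A X) Y = - of_real (q * cmod (fip Y A) ^ 2)"
        unfolding Qf_diff alpha_kmap Qf_kmap by simp
      moreover have "q * cmod (fip Y A) ^ 2 > 0" using q(1) Y(2) by simp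
      ultimately show False using cp_Qf[OF q(2), where Y=Y] by simp
    qed
  qed
qed



lemma mm_zero_right[simp]: "A ** (0 :: ('m::finite) cmat) = 0"
  by (simp add: vec_eq_iff mm_nth)
lemma mm_zero_left[simp]: "(0 :: ('m::finite) cmat) ** A = 0"
  by (simp add: vec_eq_iff mm_nth)
lemma mm_add_right: "(A + B) ** (C :: ('m::finite) cmat) = A ** C + B ** C"
  by (simp add: vec_eq_iff mm_nth sum.distrib algebra_simps)

lemma adj_one[simp]: "adj (mat 1 :: ('m::finite) cmat) = mat 1"
  by (simp add: vec_eq_iff mat_def)

lemma mm_sum_list_left: "sum_list (map f xs) ** (M :: ('m::finite) cmat) = sum_list (map (\<lambda>x. f x ** M) xs)"
  by (induction xs) (simp_all add: mm_add_right)
lemma mm_sum_list_right: "(M :: ('m::finite) cmat) ** sum_list (map f xs) = sum_list (map (\<lambda>x. M ** f x) xs)"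
  by (induction xs) (simp_all add: matrix_add_ldistrib)

fun kr :: "('m::finite) cmat list \<Rightarrow> nat \<Rightarrow> 'm cmat list" where
  "kr As 0 = [mat 1]"
| "kr As (Suc n) = concat (map (\<lambda>A. map (\<lambda>B. B ** A) (kr As n)) As)"

lemma kmap_append: "kmap (xs @ ys) X = kmap xs X + kmap ys X"
  by (simp add: kmap_def)

lemma kmap_concat: "kmap (concat (map (\<lambda>A. map (\<lambda>B. B ** A) K) As)) X
   = sum_list (map (\<lambda>A. adj A ** kmap K X ** A) As)"
proof (induction As)
  case Nil then show ?case by (simp add: kmap_def)
next
  case (Cons A As)
  have "kmap (map (\<lambda>B. B ** A) K) X = adj A ** kmap K X ** A"
    unfolding kmap_def mm_sum_list_left mm_sum_list_right
    by (simp add: o_def adj_mult matrix_mul_assoc)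
  then show ?case using Cons by (simp add: kmap_append)
qed

lemma tau_kr: "tau As ^^ n = kmap (kr As n)"
proof (induction n)
  case 0
  then show ?case by (simp add: fun_eq_iff kmap_def)
next
  case (Suc n)
  show ?case
    by (simp add: fun_eq_iff Suc kmap_concat) (simp add: tau_def)
qed

lemma kr_mult: "C \<in> set (kr As n) \<Longrightarrow> D \<in> set (kr As k) \<Longrightarrow> C ** D \<in> set (kr As (n + k))"
proof (induction k arbitrary: D)
  case 0 then show ?case by simp
next
  case (Suc k)
  then obtain A B where "A \<in> set As" "B \<in> set (kr As k)" "D = B ** A" by auto
  then show ?case using Suc.IH[of B] Suc.prems(1) by (auto simp: matrix_mul_assoc)
qed

lemma kr_one: "set (kr As (Suc 0)) = set As"
  by auto

lemma span_mult:
  assumes cl: "\<And>x y. x \<in> S \<Longrightarrow> y \<in> S \<Longrightarrow> x ** y \<in> cv.span S"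
    and x: "x \<in> cv.span S" and y: "y \<in> cv.span (S :: ('m::finite) cmat set)"
  shows "x ** y \<in> cv.span S"
proof -
  have base: "x ** y \<in> cv.span S" if "x \<in> S" for x
  proof -
    have "y \<in> {y. x ** y \<in> cv.span S}"
      using y
    proof (rule cv.span_subspace_induct)
      show "cv.subspace {y. x ** y \<in> cv.span S}"
        unfolding cv.subspace_def
        by (auto simp: matrix_add_ldistrib cscale_mult_right intro: cv.span_zero cv.span_add cv.span_scale)
      show "z \<in> {y. x ** y \<in> cv.span S}" if "z \<in> S" for z using cl[OF \<open>x \<in> S\<close> that] by simp
    qed
    then show ?thesis by simp
  qed
  have "x \<in> {x. x ** y \<in> cv.span S}"
    using x
  proof (rule cv.span_subspace_induct)
    show "cv.subspace {x. x ** y \<in> cv.span S}"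
      unfolding cv.subspace_def
      by (auto simp: mm_add_right cscale_mult_left intro: cv.span_zero cv.span_add cv.span_scale)
    show "z \<in> {x. x ** y \<in> cv.span S}" if "z \<in> S" for z using base[OF that] by simp
  qed
  then show ?thesis by simp
qed

lemma subalg_span:
  assumes "\<And>x y. x \<in> S \<Longrightarrow> y \<in> S \<Longrightarrow> x ** y \<in> cv.span S"
  shows "is_subalg (cv.span (S :: ('m::finite) cmat set))"
  unfolding is_subalg_def
  using span_mult[OF assms] by (auto intro: cv.span_zero cv.span_add cv.span_scale)

lemma subalg_subspace: "is_subalg B \<Longrightarrow> cv.subspace B"
  by (simp add: is_subalg_def cv.subspace_def)

lemma gen_ualg_eq: "gen_ualg (set As) = cv.span (\<Union>n. set (kr As n))"
proof
  let ?W = "\<Union>n. set (kr As n)"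
  have "is_subalg (cv.span ?W)"
  proof (rule subalg_span)
    fix x y assume "x \<in> ?W" "y \<in> ?W"
    then obtain n k where "x \<in> set (kr As n)" "y \<in> set (kr As k)" by blast
    then have "x ** y \<in> ?W" using kr_mult by blast
    then show "x ** y \<in> cv.span ?W" by (rule cv.span_base)
  qed
  moreover have "set As \<subseteq> cv.span ?W"
    using kr_one[of As] by (blast intro: cv.span_base)
  moreover have "mat 1 \<in> cv.span ?W"
  proof -
    have "mat 1 \<in> set (kr As 0)" by simp
    then show ?thesis by (blast intro: cv.span_base)
  qed
  ultimately show "gen_ualg (set As) \<subseteq> cv.span ?W"
    unfolding gen_ualg_def by blast
next
  let ?W = "\<Union>n. set (kr As n)"
  show "cv.span ?W \<subseteq> gen_ualg (set As)"
    unfolding gen_ualg_def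
  proof (rule Inter_greatest)
    fix B assume "B \<in> {B. is_subalg B \<and> set As \<subseteq> B \<and> mat 1 \<in> B}"
    then have B: "is_subalg B" "set As \<subseteq> B" "mat 1 \<in> B" by auto
    have "set (kr As n) \<subseteq> B" for n
    proof (induction n)
      case 0 then show ?case using B by simp
    next
      case (Suc n) then show ?case using B unfolding is_subalg_def by auto
    qed
    then have "?W \<subseteq> B" by blast
    then show "cv.span ?W \<subseteq> B" using subalg_subspace[OF B(1)] by (rule cv.span_minimal)
  qed
qed

lemma gen_alg_eq: "gen_alg (set As) = cv.span (\<Union>n. set (kr As (Suc n)))"
proof
  let ?W = "\<Union>n. set (kr As (Suc n))"
  have "is_subalg (cv.span ?W)"
  proof (rule subalg_span)
    fix x y assume "x \<in> ?W" "y \<in> ?W"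
    then obtain n k where "x \<in> set (kr As (Suc n))" "y \<in> set (kr As (Suc k))" by blast
    then have "x ** y \<in> set (kr As (Suc n + Suc k))" using kr_mult by blast
    then have "x ** y \<in> set (kr As (Suc (n + Suc k)))" by simp
    then have "x ** y \<in> ?W" by blast
    then show "x ** y \<in> cv.span ?W" by (rule cv.span_base)
  qed
  moreover have "set As \<subseteq> cv.span ?W"
  proof
    fix A assume "A \<in> set As"
    then have "A \<in> set (kr As (Suc 0))" using kr_one by blast
    then show "A \<in> cv.span ?W" by (blast intro: cv.span_base)
  qed
  ultimately show "gen_alg (set As) \<subseteq> cv.span ?W"
    unfolding gen_alg_def by blast
next
  let ?W = "\<Union>n. set (kr As (Suc n))"
  show "cv.span ?W \<subseteq> gen_alg (set As)"
    unfolding gen_alg_def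
  proof (rule Inter_greatest)
    fix B assume "B \<in> {B. is_subalg B \<and> set As \<subseteq> B}"
    then have B: "is_subalg B" "set As \<subseteq> B" by auto
    have "set (kr As (Suc n)) \<subseteq> B" for n
    proof (induction n)
      case 0 then show ?case using B by auto
    next
      case (Suc n)
      show ?case
      proof
        fix D assume "D \<in> set (kr As (Suc (Suc n)))"
        then obtain A C where "A \<in> set As" "C \<in> set (kr As (Suc n))" "D = C ** A"
          by (auto simp del: kr.simps(2) simp: kr.simps(2)[of As "Suc n"])
        then show "D \<in> B" using B Suc unfolding is_subalg_def by auto
      qed
    qed
    then have "?W \<subseteq> B" by blast
    then show "cv.span ?W \<subseteq> B" using subalg_subspace[OF B(1)] by (rule cv.span_minimal)
  qed
qed



theorem theorem5p1:
  fixes As :: "('m::finite) cmat list" and a :: "nat \<Rightarrow> real"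
  assumes "As \<noteq> []"
    and "\<forall>n. a n > 0"
    and "summable (\<lambda>n. a n *\<^sub>R Blinfun (tau As ^^ n))"
  defines "\<sigma>0 \<equiv> blinfun_apply (\<Sum>n. a n *\<^sub>R Blinfun (tau As ^^ n))"
    and "\<sigma>1 \<equiv> blinfun_apply (\<Sum>n. a (Suc n) *\<^sub>R Blinfun (tau As ^^ Suc n))"
  shows "coeff_space \<sigma>0 = gen_ualg (set As) \<and> coeff_space \<sigma>1 = gen_alg (set As)
    \<and> vector_space.dim cscale (gen_ualg (set As)) = choi_rank \<sigma>0
    \<and> vector_space.dim cscale (gen_alg (set As)) = choi_rank \<sigma>1
    \<and> (\<forall>A. A \<in> gen_ualg (set As) \<longleftrightarrow>
          (\<exists>q>0. completely_positive (\<lambda>X. \<sigma>0 X - q *\<^sub>R alpha A X)))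
    \<and> (\<forall>A. A \<in> gen_alg (set As) \<longleftrightarrow>
          (\<exists>q>0. completely_positive (\<lambda>X. \<sigma>1 X - q *\<^sub>R alpha A X)))"
proof -
  have tk: "(\<lambda>n. a n *\<^sub>R Blinfun (tau As ^^ n)) = (\<lambda>n. a n *\<^sub>R Blinfun (kmap (kr As n)))"
    by (simp add: tau_kr)
  have s0: "summable (\<lambda>n. a n *\<^sub>R Blinfun (kmap (kr As n)))" using assms(3) tk by simp
  have s1: "summable (\<lambda>n. a (Suc n) *\<^sub>R Blinfun (kmap (kr As (Suc n))))"
    using s0 summable_Suc_iff[of "\<lambda>n. a n *\<^sub>R Blinfun (kmap (kr As n))"] by simp
  have d0: "\<sigma>0 = blinfun_apply (\<Sum>n. a n *\<^sub>R Blinfun (kmap (kr As n)))"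
    unfolding \<sigma>0_def tk ..
  have d1: "\<sigma>1 = blinfun_apply (\<Sum>n. a (Suc n) *\<^sub>R Blinfun (kmap (kr As (Suc n))))"
    unfolding \<sigma>1_def by (simp add: tau_kr)
  have pos0: "\<And>n. a n > 0" using assms(2) by blast
  have pos1: "\<And>n. a (Suc n) > 0" using assms(2) by blast
  note M0 = main_abstract[where c=a and L="kr As", OF pos0 s0 d0]
  note M1 = main_abstract[where c="\<lambda>n. a (Suc n)" and L="\<lambda>n. kr As (Suc n)", OF pos1 s1 d1]
  have c0: "coeff_space \<sigma>0 = gen_ualg (set As)" using M0(1) gen_ualg_eq[of As] by metis
  have c1: "coeff_space \<sigma>1 = gen_alg (set As)" using M1(1) gen_alg_eq[of As] by metis
  have e0: "\<And>A. A \<in> gen_ualg (set As) \<longleftrightarrow> (\<exists>q>0. completely_positive (\<lambda>X. \<sigma>0 X - q *\<^sub>R alpha A X))"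
    using M0(2) gen_ualg_eq[of As] by simp
  have e1: "\<And>A. A \<in> gen_alg (set As) \<longleftrightarrow> (\<exists>q>0. completely_positive (\<lambda>X. \<sigma>1 X - q *\<^sub>R alpha A X))"
    using M1(2) gen_alg_eq[of As] by simp
  show ?thesis
    using c0 c1 e0 e1 unfolding choi_rank_def by simp
qed

end
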